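(* For any positive integers $r,h,w,p$ there exists a positive integer $s=s(r,h,w,p)$ such that the following holds. Let $G$ be a graph with no subgraph isomorphic to $K_{r,r}$. For each $i\in[p]$ let $\mathcal C_i$ be a collection of pairwise disjoint subsets of $V(G)$, each of size at most $h$, with $|\mathcal C_i|\ge s$. Then for each $i\in[p]$ there exists $\mathcal C_i'\subseteq\mathcal C_i$ with $|\mathcal C_i'|=w$ such that for all $1\le i_1<i_2\le p$, every member of $\mathcal C_{i_1}'$ is disjoint from, and has no edge of $G$ to, every member of $\mathcal C_{i_2}'$.
   Context: Graphs are finite and simple; $[p]=\{1,\dots,p\}$. *)

theory Defs
  imports Main
begin

definition simple_graph :: "'a set \<Rightarrow> ('a \<Rightarrow> 'a \<Rightarrow> bool) \<Rightarrow> bool" where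
  "simple_graph V E \<longleftrightarrow> finite V \<and> (\<forall>u v. E u v \<longrightarrow> E v u) \<and> (\<forall>v. \<not> E v v)
     \<and> (\<forall>u v. E u v \<longrightarrow> u \<in> V \<and> v \<in> V)"

definition has_Krr_subgraph :: "'a set \<Rightarrow> ('a \<Rightarrow> 'a \<Rightarrow> bool) \<Rightarrow> nat \<Rightarrow> bool" where
  "has_Krr_subgraph V E r \<longleftrightarrow> (\<exists>A B. A \<subseteq> V \<and> B \<subseteq> V \<and> A \<inter> B = {} \<and>
     card A = r \<and> card B = r \<and> (\<forall>a\<in>A. \<forall>b\<in>B. E a b))"

definition separated :: "('a \<Rightarrow> 'a \<Rightarrow> bool) \<Rightarrow> 'a set \<Rightarrow> 'a set \<Rightarrow> bool" where
  "separated E X Y \<longleftrightarrow> X \<inter> Y = {} \<and> (\<forall>x\<in>X. \<forall>y\<in>Y. \<not> E x y)"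

end

theory Submission
  imports Defs
begin

definition fam :: "'a set \<Rightarrow> nat \<Rightarrow> 'a set set \<Rightarrow> bool" where
  "fam V h A \<longleftrightarrow> (\<forall>X\<in>A. X \<subseteq> V \<and> card X \<le> h) \<and> (\<forall>X\<in>A. \<forall>Y\<in>A. X \<noteq> Y \<longrightarrow> X \<inter> Y = {}) \<and> finite A"

definition sepf :: "('a \<Rightarrow> 'a \<Rightarrow> bool) \<Rightarrow> 'a set set \<Rightarrow> 'a set set \<Rightarrow> bool" where
  "sepf E A B \<longleftrightarrow> (\<forall>X\<in>A. \<forall>Y\<in>B. separated E X Y)"

lemma fam_subset:
  assumes "fam V h A" "A' \<subseteq> A" shows "fam V h A'"
proof -
  from assms(1) have a: "\<forall>X\<in>A. X \<subseteq> V \<and> card X \<le> h"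
    and b: "\<forall>X\<in>A. \<forall>Y\<in>A. X \<noteq> Y \<longrightarrow> X \<inter> Y = {}" and c: "finite A"
    unfolding fam_def by auto
  have "finite A'" using finite_subset[OF assms(2) c] .
  moreover have "\<forall>X\<in>A'. X \<subseteq> V \<and> card X \<le> h" using a assms(2) by blast
  moreover have "\<forall>X\<in>A'. \<forall>Y\<in>A'. X \<noteq> Y \<longrightarrow> X \<inter> Y = {}" using b assms(2) by blast
  ultimately show ?thesis unfolding fam_def by blast
qed

lemma sepf_subset: "sepf E A B \<Longrightarrow> A' \<subseteq> A \<Longrightarrow> B' \<subseteq> B \<Longrightarrow> sepf E A' B'"
  unfolding sepf_def by blast

lemma pair_sep:
  fixes V :: "'a set"
  assumes G: "simple_graph V E" and nK: "\<not> has_Krr_subgraph V E r" and r0: "r > 0"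
    and fA: "fam V h A" and fB: "fam V h B"
    and cA: "card A \<ge> h*r + w" and cB: "card B \<ge> 2^(2^((h*r+w)*h)) * (2*r+w)"
  shows "\<exists>A'\<subseteq>A. \<exists>B'\<subseteq>B. card A' = w \<and> card B' = w \<and> sepf E A' B'"
proof -
  have finV: "finite V" and symE: "\<And>u v. E u v \<Longrightarrow> E v u" and irr: "\<And>v. \<not> E v v"
    and EV: "\<And>u v. E u v \<Longrightarrow> u \<in> V \<and> v \<in> V"
    using G unfolding simple_graph_def by blast+
  define m where "m = h*r + w"
  obtain A0 where A0: "A0 \<subseteq> A" "card A0 = m" using cA obtain_subset_with_card_n m_def by metis
  have finA: "finite A" using fA unfolding fam_def by blast
  have finB: "finite B" using fB unfolding fam_def by blast
  have finA0: "finite A0" using A0 finA finite_subset by blast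
  define U where "U = \<Union>A0"
  have UV: "U \<subseteq> V" using A0 fA unfolding U_def fam_def by blast
  have finU: "finite U" using UV finV finite_subset by blast
  have "card U \<le> sum card A0" unfolding U_def using finA0 card_Union_le_sum_card by blast
  also have "\<dots> \<le> card A0 * h"
    using sum_bounded_above[of A0 card h] A0 fA unfolding fam_def by auto
  finally have cardU: "card U \<le> m*h" using A0 by simp
  define N' where "N' y = {u\<in>U. u = y \<or> E y u}" for y
  define Q where "Q Y = N' ` Y" for Y
  define K :: nat where "K = 2^(2^(m*h))"
  have QP: "Q ` B \<subseteq> Pow (Pow U)" unfolding Q_def N'_def by auto
  have "card (Q ` B) \<le> card (Pow (Pow U))"
    using QP finU by (simp add: card_mono)
  also have "\<dots> = 2^(2^(card U))" using finU by (simp add: card_Pow)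
  also have "\<dots> \<le> K" unfolding K_def using cardU
    by (simp add: power_increasing)
  finally have cQ: "card (Q ` B) \<le> K" .
  have Kpos: "K > 0" unfolding K_def by simp
  have "\<exists>q\<in>Q ` B. card {Y\<in>B. Q Y = q} \<ge> 2*r+w"
  proof (rule ccontr)
    assume "\<not> ?thesis"
    hence lt: "\<And>q. q \<in> Q ` B \<Longrightarrow> card {Y\<in>B. Q Y = q} \<le> 2*r+w - 1" by fastforce
    have "B = (\<Union>q\<in>Q ` B. {Y\<in>B. Q Y = q})" by auto
    hence "card B \<le> (\<Sum>q\<in>Q ` B. card {Y\<in>B. Q Y = q})"
      using card_UN_le[of "Q ` B" "\<lambda>q. {Y\<in>B. Q Y = q}"] finB by simp
    also have "\<dots> \<le> card (Q ` B) * (2*r+w-1)"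
      using sum_bounded_above[of "Q ` B" "\<lambda>q. card {Y\<in>B. Q Y = q}" "2*r+w-1"] lt by auto
    also have "\<dots> \<le> K * (2*r+w-1)" using cQ by simp
    also have "\<dots> < K * (2*r+w)" using Kpos r0 by simp
    finally show False using cB unfolding K_def m_def by simp
  qed
  then obtain q where q: "q \<in> Q ` B" "card {Y\<in>B. Q Y = q} \<ge> 2*r+w" by blast
  define B0 where "B0 = {Y\<in>B. Q Y = q}"
  have B0B: "B0 \<subseteq> B" unfolding B0_def by blast
  obtain Y0 where Y0: "Y0 \<in> B" "Q Y0 = q" using q by blast
  have QB0: "\<And>Y. Y \<in> B0 \<Longrightarrow> Q Y = Q Y0" unfolding B0_def using Y0 by simp
  have cB0: "card B0 \<ge> 2*r+w" using q B0_def by simp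
  have finB0: "finite B0" using B0B finB finite_subset by blast
  have small: "card S < r" if S: "S \<in> Q Y0" for S
  proof (rule ccontr)
    assume "\<not> card S < r"
    then obtain T where T: "T \<subseteq> S" "card T = r" using obtain_subset_with_card_n by (metis not_less)
    have ex: "\<exists>y. y \<in> Y \<and> N' y = S" if "Y \<in> B0" for Y
      using QB0[OF that] S unfolding Q_def by (metis imageE)
    define g where "g Y = (SOME y. y \<in> Y \<and> N' y = S)" for Y
    have g: "g Y \<in> Y \<and> N' (g Y) = S" if "Y \<in> B0" for Y
      unfolding g_def using someI_ex[OF ex[OF that]] .
    have inj: "inj_on g B0"
    proof (rule inj_onI)
      fix Y1 Y2 assume a: "Y1 \<in> B0" "Y2 \<in> B0" "g Y1 = g Y2"
      hence "g Y1 \<in> Y1 \<inter> Y2" using g[OF a(1)] g[OF a(2)] a(3) by (metis IntI)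
      moreover have "Y1 \<in> B" "Y2 \<in> B" using a B0B by blast+
      moreover have "\<forall>X\<in>B. \<forall>Y\<in>B. X \<noteq> Y \<longrightarrow> X \<inter> Y = {}" using fB unfolding fam_def by blast
      ultimately show "Y1 = Y2" by blast
    qed
    have cg: "card (g ` B0) \<ge> 2*r+w" using card_image[OF inj] cB0 by simp
    have finT: "finite T" using T \<open>card T = r\<close> r0 card_ge_0_finite by blast
    define W where "W = g ` B0 - T"
    have "card (g ` B0) - card T \<le> card W" unfolding W_def using diff_card_le_card_Diff finT by blast
    hence "card W \<ge> r" using cg T by simp
    then obtain B' where B': "B' \<subseteq> W" "card B' = r" using obtain_subset_with_card_n by metis
    have SU: "S \<subseteq> U" using S unfolding Q_def N'_def by auto
    have edges: "E a b" if "a \<in> T" "b \<in> B'" for a b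
    proof -
      from that B' obtain Y where Y: "Y \<in> B0" "b = g Y" "b \<notin> T" unfolding W_def by blast
      have "a \<in> N' b" using g[OF Y(1)] Y T that by auto
      moreover have "a \<noteq> b" using Y that by blast
      ultimately show "E a b" unfolding N'_def using symE by blast
    qed
    have "has_Krr_subgraph V E r"
      unfolding has_Krr_subgraph_def
    proof (intro exI conjI)
      show "T \<subseteq> V" using T SU UV by blast
      show "B' \<subseteq> V"
      proof
        fix b assume b: "b \<in> B'"
        obtain a where "a \<in> T" using T r0 by fastforce
        thus "b \<in> V" using edges b EV by blast
      qed
      show "T \<inter> B' = {}" using B' unfolding W_def by blast
    qed (use T B' edges in auto)
    thus False using nK by blast
  qed
  define D where "D = \<Union>(Q Y0)"
  have "Y0 \<subseteq> V" using Y0 fB unfolding fam_def by blast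
  hence finY0: "finite Y0" using finV finite_subset by blast
  have cY0: "card Y0 \<le> h" using Y0 fB unfolding fam_def by blast
  have finQ: "finite (Q Y0)" unfolding Q_def using finY0 by simp
  have "card D \<le> sum card (Q Y0)" unfolding D_def using finQ card_Union_le_sum_card by blast
  also have "\<dots> \<le> card (Q Y0) * r"
  proof -
    have hb: "\<And>S. S \<in> Q Y0 \<Longrightarrow> card S \<le> r" using small less_imp_le by blast
    show ?thesis using sum_bounded_above[of "Q Y0" card r, OF hb] by simp
  qed
  also have "\<dots> \<le> h * r"
  proof -
    have "card (Q Y0) \<le> card Y0" unfolding Q_def by (rule card_image_le[OF finY0])
    hence "card (Q Y0) \<le> h" using cY0 by linarith
    thus ?thesis by (rule mult_le_mono1)
  qed
  finally have cD: "card D \<le> h*r" .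
  have DU: "D \<subseteq> U" unfolding D_def Q_def N'_def by auto
  have finD: "finite D" using DU finU finite_subset by blast
  define Abad where "Abad = {X\<in>A0. X \<inter> D \<noteq> {}}"
  define A1 where "A1 = A0 - Abad"
  have "card Abad \<le> card D"
  proof -
    define c where "c X = (SOME d. d \<in> X \<inter> D)" for X
    have c: "c X \<in> X \<inter> D" if "X \<in> Abad" for X
    proof -
      have "\<exists>d. d \<in> X \<inter> D" using that unfolding Abad_def by blast
      thus ?thesis unfolding c_def by (rule someI_ex)
    qed
    have "inj_on c Abad"
    proof (rule inj_onI)
      fix X1 X2 assume a: "X1 \<in> Abad" "X2 \<in> Abad" "c X1 = c X2"
      hence "c X1 \<in> X1 \<inter> X2" using c by (metis IntD1 IntI)
      moreover have "X1 \<in> A" "X2 \<in> A" using a A0 unfolding Abad_def by blast+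
      moreover have "\<forall>X\<in>A. \<forall>Y\<in>A. X \<noteq> Y \<longrightarrow> X \<inter> Y = {}" using fA unfolding fam_def by blast
      ultimately show "X1 = X2" by blast
    qed
    moreover have "c ` Abad \<subseteq> D" using c by blast
    ultimately show ?thesis using card_inj_on_le finD by blast
  qed
  have finAbad: "finite Abad" using finA0 Abad_def by simp
  have "card A1 = card A0 - card Abad" unfolding A1_def
    using card_Diff_subset[OF finAbad] Abad_def by blast
  hence cA1: "card A1 \<ge> w" using cD \<open>card Abad \<le> card D\<close> A0 m_def by linarith
  have sep: "sepf E A1 B0"
    unfolding sepf_def separated_def
  proof (intro ballI conjI)
    fix X Y assume X: "X \<in> A1" and Y: "Y \<in> B0"
    have XD: "X \<inter> D = {}" using X unfolding A1_def Abad_def by blast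
    have XU: "X \<subseteq> U" using X unfolding A1_def U_def by blast
    show "X \<inter> Y = {}"
    proof (rule ccontr)
      assume "X \<inter> Y \<noteq> {}"
      then obtain y where y: "y \<in> X" "y \<in> Y" by blast
      have "y \<in> N' y" using y XU unfolding N'_def by blast
      moreover have "N' y \<in> Q Y0" using QB0[OF Y] y unfolding Q_def by blast
      ultimately have "y \<in> D" unfolding D_def by blast
      thus False using XD y by blast
    qed
    fix x y assume x: "x \<in> X" and y: "y \<in> Y"
    show "\<not> E x y"
    proof
      assume "E x y"
      hence "x \<in> N' y" using x XU symE unfolding N'_def by blast
      moreover have "N' y \<in> Q Y0" using QB0[OF Y] y unfolding Q_def by blast
      ultimately have "x \<in> D" unfolding D_def by blast
      thus False using XD x by blast
    qed
  qed
  obtain A' where A': "A' \<subseteq> A1" "card A' = w" using cA1 obtain_subset_with_card_n by metis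
  obtain B' where B': "B' \<subseteq> B0" "card B' = w" using cB0 obtain_subset_with_card_n
    by (metis add_leE)
  have "A' \<subseteq> A" using A' A0 A1_def by blast
  moreover have "B' \<subseteq> B" using B' B0B by blast
  moreover have "sepf E A' B'" using sepf_subset[OF sep A'(1) B'(1)] .
  ultimately show ?thesis using A' B' by blast
qed


lemma one_vs_many:
  fixes r h :: nat and k :: nat
  assumes r0: "r > 0"
  shows "\<forall>t. \<exists>s. \<forall>(V::'a set) E C N. simple_graph V E \<longrightarrow> \<not> has_Krr_subgraph V E r \<longrightarrow>
     (\<forall>i\<in>{1..k}. fam V h (C i) \<and> card (C i) \<ge> s) \<longrightarrow> fam V h N \<longrightarrow> card N \<ge> s \<longrightarrow>
     (\<exists>C'' N''. (\<forall>i\<in>{1..k}. C'' i \<subseteq> C i \<and> card (C'' i) = t) \<and> N'' \<subseteq> N \<and> card N'' = t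
        \<and> (\<forall>i\<in>{1..k}. sepf E (C'' i) N''))"
proof (induction k)
  case 0
  show ?case
    apply (intro allI)
    subgoal for t
      apply (rule exI[of _ t])
      apply (intro allI impI)
      subgoal premises prems for V E C N
      proof -
        obtain T where "T \<subseteq> N" "card T = t" using obtain_subset_with_card_n[of t N] prems(5) by auto
        hence "T \<subseteq> N \<and> card T = t \<and> (\<forall>i\<in>{1..0::nat}. sepf E (C i) T)" by simp
        moreover have "\<forall>i\<in>{1..0::nat}. C i \<subseteq> C i \<and> card (C i) = t" by simp
        ultimately show ?thesis by blast
      qed
      done
    done
next
  case (Suc k)
  show ?case
  proof
    fix t
    obtain sk where sk: "\<forall>(V::'a set) E C N. simple_graph V E \<longrightarrow> \<not> has_Krr_subgraph V E r \<longrightarrow>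
     (\<forall>i\<in>{1..k}. fam V h (C i) \<and> card (C i) \<ge> sk) \<longrightarrow> fam V h N \<longrightarrow> card N \<ge> sk \<longrightarrow>
     (\<exists>C'' N''. (\<forall>i\<in>{1..k}. C'' i \<subseteq> C i \<and> card (C'' i) = t) \<and> N'' \<subseteq> N \<and> card N'' = t
        \<and> (\<forall>i\<in>{1..k}. sepf E (C'' i) N''))" by (rule exE[OF spec[OF Suc.IH, of t]])
    define w where "w = sk + t"
    define P where "P = 2^(2^((h*r+w)*h)) * (2*r+w)"
    define s where "s = P + (h*r+w)"
    show "\<exists>s. \<forall>(V::'a set) E C N. simple_graph V E \<longrightarrow> \<not> has_Krr_subgraph V E r \<longrightarrow>
     (\<forall>i\<in>{1..Suc k}. fam V h (C i) \<and> card (C i) \<ge> s) \<longrightarrow> fam V h N \<longrightarrow> card N \<ge> s \<longrightarrow>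
     (\<exists>C'' N''. (\<forall>i\<in>{1..Suc k}. C'' i \<subseteq> C i \<and> card (C'' i) = t) \<and> N'' \<subseteq> N \<and> card N'' = t
        \<and> (\<forall>i\<in>{1..Suc k}. sepf E (C'' i) N''))"
    proof (rule exI[of _ s], intro allI impI)
      fix V :: "'a set" and E C N
      assume G: "simple_graph V E" and nK: "\<not> has_Krr_subgraph V E r"
        and hC: "\<forall>i\<in>{1..Suc k}. fam V h (C i) \<and> card (C i) \<ge> s"
        and fN: "fam V h N" and cN: "card N \<ge> s"
      have hk: "fam V h (C (Suc k))" "card (C (Suc k)) \<ge> s" using hC by auto
      have c1: "card (C (Suc k)) \<ge> h*r+w" using order_trans[OF le_add2 hk(2)[unfolded s_def]] .
      have c2': "card N \<ge> P" using order_trans[OF le_add1 cN[unfolded s_def]] .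
      have c2: "card N \<ge> 2^(2^((h*r+w)*h)) * (2*r+w)" using c2' unfolding P_def .
      obtain A1 N1 where AN: "A1 \<subseteq> C (Suc k)" "N1 \<subseteq> N" "card A1 = w" "card N1 = w" "sepf E A1 N1"
        using pair_sep[OF G nK r0 hk(1) fN c1 c2] by blast
      have fN1: "fam V h N1" using fam_subset[OF fN AN(2)] .
      have sks: "sk \<le> s" unfolding s_def w_def by linarith
      have hC': "\<forall>i\<in>{1..k}. fam V h (C i) \<and> card (C i) \<ge> sk"
      proof
        fix i assume "i \<in> {1..k}"
        hence "i \<in> {1..Suc k}" by simp
        thus "fam V h (C i) \<and> card (C i) \<ge> sk" using hC sks by (meson le_trans)
      qed
      have cN1: "card N1 \<ge> sk" using AN(4) w_def by simp
      obtain C'' N'' where CN: "\<forall>i\<in>{1..k}. C'' i \<subseteq> C i \<and> card (C'' i) = t" "N'' \<subseteq> N1" "card N'' = t"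
        "\<forall>i\<in>{1..k}. sepf E (C'' i) N''"
        using sk[rule_format, OF G nK _ fN1 cN1] hC' by blast
      obtain A2 where A2: "A2 \<subseteq> A1" "card A2 = t" using obtain_subset_with_card_n[of t A1] AN(3) w_def by auto
      have sA2: "sepf E A2 N''" using sepf_subset[OF AN(5) A2(1) CN(2)] .
      show "\<exists>C'' N''. (\<forall>i\<in>{1..Suc k}. C'' i \<subseteq> C i \<and> card (C'' i) = t) \<and> N'' \<subseteq> N \<and> card N'' = t
        \<and> (\<forall>i\<in>{1..Suc k}. sepf E (C'' i) N'')"
      proof (rule exI[of _ "C''(Suc k := A2)"], rule exI[of _ N''], intro conjI ballI)
        fix i assume i: "i \<in> {1..Suc k}"
        show "(C''(Suc k := A2)) i \<subseteq> C i" using i CN(1) A2 AN(1) by (cases "i = Suc k") auto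
        show "card ((C''(Suc k := A2)) i) = t" using i CN(1) A2 by (cases "i = Suc k") auto
        show "sepf E ((C''(Suc k := A2)) i) N''" using i CN(4) sA2 by (cases "i = Suc k") auto
      next
        show "N'' \<subseteq> N" using CN(2) AN(2) by blast
        show "card N'' = t" using CN(3) .
      qed
    qed
  qed
qed


lemma multi:
  fixes r h :: nat and p :: nat
  assumes r0: "r > 0"
  shows "\<forall>t. \<exists>s. \<forall>(V::'a set) E C. simple_graph V E \<longrightarrow> \<not> has_Krr_subgraph V E r \<longrightarrow>
     (\<forall>i\<in>{1..p}. fam V h (C i) \<and> card (C i) \<ge> s) \<longrightarrow>
     (\<exists>C'. (\<forall>i\<in>{1..p}. C' i \<subseteq> C i \<and> card (C' i) = t) \<and>
        (\<forall>i1\<in>{1..p}. \<forall>i2\<in>{1..p}. i1 < i2 \<longrightarrow> sepf E (C' i1) (C' i2)))"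
proof (induction p)
  case 0
  show ?case
    apply (intro allI)
    subgoal for t
      apply (rule exI[of _ 0])
      apply (intro allI impI)
      subgoal for V E C
        by (rule exI[of _ C]) simp
      done
    done
next
  case (Suc p)
  show ?case
  proof
    fix t
    obtain sp where sp: "\<forall>(V::'a set) E C. simple_graph V E \<longrightarrow> \<not> has_Krr_subgraph V E r \<longrightarrow>
     (\<forall>i\<in>{1..p}. fam V h (C i) \<and> card (C i) \<ge> sp) \<longrightarrow>
     (\<exists>C'. (\<forall>i\<in>{1..p}. C' i \<subseteq> C i \<and> card (C' i) = t) \<and>
        (\<forall>i1\<in>{1..p}. \<forall>i2\<in>{1..p}. i1 < i2 \<longrightarrow> sepf E (C' i1) (C' i2)))" by (rule exE[OF spec[OF Suc.IH, of t]])
    define T where "T = sp + t"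
    obtain sL where sL: "\<forall>(V::'a set) E C N. simple_graph V E \<longrightarrow> \<not> has_Krr_subgraph V E r \<longrightarrow>
     (\<forall>i\<in>{1..p}. fam V h (C i) \<and> card (C i) \<ge> sL) \<longrightarrow> fam V h N \<longrightarrow> card N \<ge> sL \<longrightarrow>
     (\<exists>C'' N''. (\<forall>i\<in>{1..p}. C'' i \<subseteq> C i \<and> card (C'' i) = T) \<and> N'' \<subseteq> N \<and> card N'' = T
        \<and> (\<forall>i\<in>{1..p}. sepf E (C'' i) N''))"
      by (rule exE[OF spec[OF one_vs_many[OF r0, where h=h and k=p], of T]])
    show "\<exists>s. \<forall>(V::'a set) E C. simple_graph V E \<longrightarrow> \<not> has_Krr_subgraph V E r \<longrightarrow>
     (\<forall>i\<in>{1..Suc p}. fam V h (C i) \<and> card (C i) \<ge> s) \<longrightarrow>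
     (\<exists>C'. (\<forall>i\<in>{1..Suc p}. C' i \<subseteq> C i \<and> card (C' i) = t) \<and>
        (\<forall>i1\<in>{1..Suc p}. \<forall>i2\<in>{1..Suc p}. i1 < i2 \<longrightarrow> sepf E (C' i1) (C' i2)))"
    proof (rule exI[of _ sL], intro allI impI)
      fix V :: "'a set" and E C
      assume G: "simple_graph V E" and nK: "\<not> has_Krr_subgraph V E r"
        and hC: "\<forall>i\<in>{1..Suc p}. fam V h (C i) \<and> card (C i) \<ge> sL"
      have hC1: "\<forall>i\<in>{1..p}. fam V h (C i) \<and> card (C i) \<ge> sL" using hC by auto
      have hN: "fam V h (C (Suc p))" "card (C (Suc p)) \<ge> sL" using hC by auto
      obtain C'' N'' where CN: "\<forall>i\<in>{1..p}. C'' i \<subseteq> C i \<and> card (C'' i) = T" "N'' \<subseteq> C (Suc p)"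
        "card N'' = T" "\<forall>i\<in>{1..p}. sepf E (C'' i) N''"
        using sL[rule_format, OF G nK _ hN(1) hN(2)] hC1 by blast
      have hC2: "\<forall>i\<in>{1..p}. fam V h (C'' i) \<and> card (C'' i) \<ge> sp"
      proof
        fix i assume i: "i \<in> {1..p}"
        have "fam V h (C'' i)" using fam_subset[of V h "C i" "C'' i"] hC1 CN(1) i by blast
        moreover have "card (C'' i) \<ge> sp" using CN(1) i T_def by simp
        ultimately show "fam V h (C'' i) \<and> card (C'' i) \<ge> sp" by blast
      qed
      obtain C3 where C3: "\<forall>i\<in>{1..p}. C3 i \<subseteq> C'' i \<and> card (C3 i) = t"
        "\<forall>i1\<in>{1..p}. \<forall>i2\<in>{1..p}. i1 < i2 \<longrightarrow> sepf E (C3 i1) (C3 i2)"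
        using sp[rule_format, OF G nK _] hC2 by blast
      obtain N3 where N3: "N3 \<subseteq> N''" "card N3 = t" using obtain_subset_with_card_n[of t N''] CN(3) T_def by auto
      show "\<exists>C'. (\<forall>i\<in>{1..Suc p}. C' i \<subseteq> C i \<and> card (C' i) = t) \<and>
        (\<forall>i1\<in>{1..Suc p}. \<forall>i2\<in>{1..Suc p}. i1 < i2 \<longrightarrow> sepf E (C' i1) (C' i2))"
      proof (rule exI[of _ "C3(Suc p := N3)"], intro conjI ballI impI)
        fix i assume i: "i \<in> {1..Suc p}"
        show "(C3(Suc p := N3)) i \<subseteq> C i"
        proof (cases "i = Suc p")
          case True thus ?thesis using N3 CN(2) by auto
        next
          case False hence ip: "i \<in> {1..p}" using i by auto
          have "C3 i \<subseteq> C'' i" "C'' i \<subseteq> C i" using C3(1) CN(1) ip by auto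
          thus ?thesis using False by auto
        qed
        show "card ((C3(Suc p := N3)) i) = t"
        proof (cases "i = Suc p")
          case True thus ?thesis using N3 by auto
        next
          case False hence "i \<in> {1..p}" using i by auto
          thus ?thesis using False C3(1) by auto
        qed
      next
        fix i1 i2 assume i1: "i1 \<in> {1..Suc p}" and i2: "i2 \<in> {1..Suc p}" and lt: "i1 < i2"
        have i1p: "i1 \<in> {1..p}" using i1 i2 lt by auto
        show "sepf E ((C3(Suc p := N3)) i1) ((C3(Suc p := N3)) i2)"
        proof (cases "i2 = Suc p")
          case True
          have "sepf E (C3 i1) N3" using sepf_subset[of E "C'' i1" N'' "C3 i1" N3] CN(4) C3(1) N3(1) i1p by blast
          moreover have "i1 \<noteq> Suc p" using i1p by simp
          ultimately show ?thesis using True by simp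
        next
          case False hence i2p: "i2 \<in> {1..p}" using i2 by auto
          have "sepf E (C3 i1) (C3 i2)" using C3(2) i1p i2p lt by blast
          moreover have "i1 \<noteq> Suc p" using i1p by simp
          ultimately show ?thesis using False by simp
        qed
      qed
    qed
  qed
qed

theorem mainTheorem10:
  fixes r h w p :: nat
  assumes "r > 0" "h > 0" "w > 0" "p > 0"
  shows "\<exists>s::nat. s > 0 \<and>
    (\<forall>(V::nat set) E (C :: nat \<Rightarrow> nat set set).
      simple_graph V E \<longrightarrow> \<not> has_Krr_subgraph V E r \<longrightarrow>
      (\<forall>i\<in>{1..p}. (\<forall>X\<in>C i. X \<subseteq> V \<and> card X \<le> h)
                  \<and> (\<forall>X\<in>C i. \<forall>Y\<in>C i. X \<noteq> Y \<longrightarrow> X \<inter> Y = {})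
                  \<and> finite (C i) \<and> card (C i) \<ge> s) \<longrightarrow>
      (\<exists>C' :: nat \<Rightarrow> nat set set.
         (\<forall>i\<in>{1..p}. C' i \<subseteq> C i \<and> finite (C' i) \<and> card (C' i) = w) \<and>
         (\<forall>i1\<in>{1..p}. \<forall>i2\<in>{1..p}. i1 < i2 \<longrightarrow>
            (\<forall>X\<in>C' i1. \<forall>Y\<in>C' i2. separated E X Y))))"
proof -
  obtain s0 where s0: "\<forall>(V::nat set) E C. simple_graph V E \<longrightarrow> \<not> has_Krr_subgraph V E r \<longrightarrow>
     (\<forall>i\<in>{1..p}. fam V h (C i) \<and> card (C i) \<ge> s0) \<longrightarrow>
     (\<exists>C'. (\<forall>i\<in>{1..p}. C' i \<subseteq> C i \<and> card (C' i) = w) \<and>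
        (\<forall>i1\<in>{1..p}. \<forall>i2\<in>{1..p}. i1 < i2 \<longrightarrow> sepf E (C' i1) (C' i2)))"
    by (rule exE[OF spec[OF multi[OF assms(1), where h=h and p=p], of w]])
  show ?thesis
  proof (rule exI[of _ "s0 + 1"], intro conjI allI impI)
    show "s0 + 1 > 0" by simp
    fix V :: "nat set" and E C
    assume G: "simple_graph V E" and nK: "\<not> has_Krr_subgraph V E r"
      and hC: "\<forall>i\<in>{1..p}. (\<forall>X\<in>C i. X \<subseteq> V \<and> card X \<le> h)
                  \<and> (\<forall>X\<in>C i. \<forall>Y\<in>C i. X \<noteq> Y \<longrightarrow> X \<inter> Y = {})
                  \<and> finite (C i) \<and> card (C i) \<ge> s0 + 1"
    have hC': "\<forall>i\<in>{1..p}. fam V h (C i) \<and> card (C i) \<ge> s0"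
      using hC unfolding fam_def by fastforce
    obtain C' where C': "\<forall>i\<in>{1..p}. C' i \<subseteq> C i \<and> card (C' i) = w"
      "\<forall>i1\<in>{1..p}. \<forall>i2\<in>{1..p}. i1 < i2 \<longrightarrow> sepf E (C' i1) (C' i2)"
      using s0[rule_format, OF G nK _] hC' by blast
    show "\<exists>C' :: nat \<Rightarrow> nat set set.
         (\<forall>i\<in>{1..p}. C' i \<subseteq> C i \<and> finite (C' i) \<and> card (C' i) = w) \<and>
         (\<forall>i1\<in>{1..p}. \<forall>i2\<in>{1..p}. i1 < i2 \<longrightarrow>
            (\<forall>X\<in>C' i1. \<forall>Y\<in>C' i2. separated E X Y))"
    proof (rule exI[of _ C'], intro conjI ballI impI)
      fix i assume i: "i \<in> {1..p}"
      show "C' i \<subseteq> C i" "card (C' i) = w" using C'(1) i by auto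
      have "finite (C i)" using hC i by blast
      moreover have "C' i \<subseteq> C i" using C'(1) i by blast
      ultimately show "finite (C' i)" by (rule finite_subset[rotated])
    next
      fix i1 i2 X Y assume "i1 \<in> {1..p}" "i2 \<in> {1..p}" "i1 < i2" "X \<in> C' i1" "Y \<in> C' i2"
      hence "sepf E (C' i1) (C' i2)" using C'(2) by blast
      thus "separated E X Y" using \<open>X \<in> C' i1\<close> \<open>Y \<in> C' i2\<close> unfolding sepf_def by blast
    qed
  qed
qed

end
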